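(* Let $G_1,G_2,\dots$ be probability generating functions of nonnegative integer-valued random variables with $\rho_i=G_i'(1)\in(0,1)$ and $G_i''(1)<\infty$, such that $\lim_{n}\rho_n=1$, $\sum_{n=1}^\infty(1-\rho_n)=\infty$, and $\lim_n G_n''(1)/(1-\rho_n)=0$. With $\rho_{[j,n]}=\rho_{j+1}\cdots\rho_n$, $\vartheta_{i,n}=\big(1-G_i(1-\rho_{[i,n]})\big)/\rho_{[i,n]}$ and $\vartheta_{[j,n]}=\vartheta_{j+1,n}\cdots\vartheta_{n,n}$ (empty products $=1$), one has $$\lim_{n\to\infty}\sum_{j=1}^n(1-\rho_j)\vartheta_{[j,n]}=1.$$ *)

theory Defs
  imports "HOL-Probability.Probability"
begin

definition pgf :: "nat pmf \<Rightarrow> real \<Rightarrow> real" where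
  "pgf p s = (\<Sum>k. pmf p k * s ^ k)"

text \<open>G'(1) (left derivative at 1) = E[X]; G''(1) = E[X(X-1)] (factorial moments).\<close>
definition pgf_d1 :: "nat pmf \<Rightarrow> real" where
  "pgf_d1 p = (\<Sum>k. real k * pmf p k)"

definition pgf_d2 :: "nat pmf \<Rightarrow> real" where
  "pgf_d2 p = (\<Sum>k. real k * (real k - 1) * pmf p k)"

definition rho_prod :: "(nat \<Rightarrow> real) \<Rightarrow> nat \<Rightarrow> nat \<Rightarrow> real" where
  "rho_prod \<rho> j n = (\<Prod>k\<in>{j+1..n}. \<rho> k)"

definition theta :: "(nat \<Rightarrow> nat pmf) \<Rightarrow> (nat \<Rightarrow> real) \<Rightarrow> nat \<Rightarrow> nat \<Rightarrow> real" where
  "theta P \<rho> i n = (1 - pgf (P i) (1 - rho_prod \<rho> i n)) / rho_prod \<rho> i n"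

definition theta_prod :: "(nat \<Rightarrow> nat pmf) \<Rightarrow> (nat \<Rightarrow> real) \<Rightarrow> nat \<Rightarrow> nat \<Rightarrow> real" where
  "theta_prod P \<rho> j n = (\<Prod>i\<in>{j+1..n}. theta P \<rho> i n)"

end

theory Submission imports Defs begin

lemma pmf_sums1: "pmf (p::nat pmf) sums 1"
  using sums_infsetsum_nat'[OF pmf_abs_summable[of p UNIV]] infsetsum_pmf_eq_1[of p UNIV] by simp

lemma pow_upper:
  fixes r :: real assumes "0 \<le> r" "r \<le> 1"
  shows "(1-r)^k \<le> 1 - real k * r + real k * (real k - 1) / 2 * r^2"
proof (induction k)
  case 0 then show ?case by simp
next
  case (Suc k)
  have "(1-r)^Suc k = (1-r) * (1-r)^k" by simp
  also have "\<dots> \<le> (1-r) * (1 - real k * r + real k * (real k - 1) / 2 * r^2)"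
    using Suc assms by (intro mult_left_mono) auto
  also have "\<dots> \<le> 1 - real (Suc k) * r + real (Suc k) * (real (Suc k) - 1) / 2 * r^2"
  proof -
    have "0 \<le> real k * (real k - 1) / 2 * r^3"
      by (cases k) (auto simp: assms)
    moreover have "(1 - real (Suc k) * r + real (Suc k) * (real (Suc k) - 1) / 2 * r^2)
       - (1-r) * (1 - real k * r + real k * (real k - 1) / 2 * r^2) = real k * (real k - 1) / 2 * r^3"
      by (simp add: field_simps power2_eq_square power3_eq_cube)
    ultimately show ?thesis by linarith
  qed
  finally show ?case .
qed

lemma pow_lower:
  fixes r :: real assumes "0 \<le> r" "r \<le> 1"
  shows "1 - real k * r \<le> (1-r)^k"
  using Bernoulli_inequality[of "-r" k] assms by simp

lemma pgf_bounds:
  fixes p :: "nat pmf" and r :: real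
  assumes s1: "summable (\<lambda>k. real k * pmf p k)"
    and s2: "summable (\<lambda>k. real k * (real k - 1) * pmf p k)"
    and r: "0 \<le> r" "r \<le> 1"
  shows "1 - pgf p (1-r) \<le> pgf_d1 p * r"
    and "pgf_d1 p * r - pgf_d2 p / 2 * r^2 \<le> 1 - pgf p (1-r)"
    and "0 \<le> 1 - pgf p (1-r)"
    and "0 \<le> pgf_d2 p"
proof -
  have sp: "summable (pmf p)" using pmf_sums1 sums_summable by blast
  have sg: "summable (\<lambda>k. pmf p k * (1-r)^k)"
    by (rule summable_comparison_test'[OF sp, of 0]) (use r in \<open>auto simp: abs_mult intro!: mult_left_le power_le_one\<close>)
  have eq: "1 - pgf p (1-r) = (\<Sum>k. pmf p k * (1 - (1-r)^k))"
  proof -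
    have "(\<lambda>k. pmf p k - pmf p k * (1-r)^k) sums (1 - pgf p (1-r))"
      unfolding pgf_def using pmf_sums1 sg by (intro sums_diff) (auto simp: summable_sums)
    then show ?thesis by (simp add: sums_iff algebra_simps)
  qed
  have sd: "summable (\<lambda>k. pmf p k * (1 - (1-r)^k))"
    using sp sg by (simp add: right_diff_distrib summable_diff)
  show "1 - pgf p (1-r) \<le> pgf_d1 p * r"
    unfolding eq pgf_d1_def
  proof -
    have "(\<Sum>k. pmf p k * (1 - (1-r)^k)) \<le> (\<Sum>k. real k * pmf p k * r)"
    proof (rule suminf_le[OF _ sd summable_mult2[OF s1, of r]])
      fix k
      have "pmf p k * (1 - (1-r)^k) \<le> pmf p k * (real k * r)"
        using pow_lower[OF r, of k] by (intro mult_left_mono) auto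
      then show "pmf p k * (1 - (1-r)^k) \<le> real k * pmf p k * r" by (simp add: algebra_simps)
    qed
    also have "\<dots> = (\<Sum>k. real k * pmf p k) * r" using suminf_mult2[OF s1] by simp
    finally show "(\<Sum>k. pmf p k * (1 - (1-r)^k)) \<le> (\<Sum>k. real k * pmf p k) * r" .
  qed
  have s3: "summable (\<lambda>k. real k * pmf p k * r - real k * (real k - 1) * pmf p k / 2 * r^2)"
    using summable_mult2[OF s1, of r] summable_mult2[OF summable_divide[OF s2, of 2], of "r^2"]
    by (intro summable_diff) auto
  show "pgf_d1 p * r - pgf_d2 p / 2 * r^2 \<le> 1 - pgf p (1-r)"
    unfolding eq pgf_d1_def pgf_d2_def
  proof -
    have "(\<Sum>k. real k * pmf p k) * r - (\<Sum>k. real k * (real k - 1) * pmf p k) / 2 * r^2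
        = (\<Sum>k. real k * pmf p k * r - real k * (real k - 1) * pmf p k / 2 * r^2)"
      using suminf_mult2[OF s1, of r] suminf_mult2[OF summable_divide[OF s2, of 2], of "r^2"]
        suminf_divide[OF s2, of 2]
        suminf_diff[OF summable_mult2[OF s1, of r] summable_mult2[OF summable_divide[OF s2, of 2], of "r^2"]]
      by simp
    also have "\<dots> \<le> (\<Sum>k. pmf p k * (1 - (1-r)^k))"
    proof (rule suminf_le[OF _ s3 sd])
      fix k
      have "real k * r - real k * (real k - 1) / 2 * r^2 \<le> 1 - (1-r)^k"
        using pow_upper[OF r, of k] by simp
      then have "pmf p k * (real k * r - real k * (real k - 1) / 2 * r^2) \<le> pmf p k * (1 - (1-r)^k)"
        by (intro mult_left_mono) auto
      then show "real k * pmf p k * r - real k * (real k - 1) * pmf p k / 2 * r^2 \<le> pmf p k * (1 - (1-r)^k)"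
        by (simp add: algebra_simps)
    qed
    finally show "(\<Sum>k. real k * pmf p k) * r - (\<Sum>k. real k * (real k - 1) * pmf p k) / 2 * r^2
        \<le> (\<Sum>k. pmf p k * (1 - (1-r)^k))" .
  qed
  show "0 \<le> 1 - pgf p (1-r)"
    unfolding eq using r by (intro suminf_nonneg[OF sd]) (auto simp: power_le_one)
  show "0 \<le> pgf_d2 p"
    unfolding pgf_d2_def
  proof (rule suminf_nonneg[OF s2])
    fix k show "0 \<le> real k * (real k - 1) * pmf p k" by (cases k) auto
  qed
qed


lemma prod_one_minus_ge:
  fixes u :: "'a \<Rightarrow> real"
  assumes "finite A" "\<And>i. i \<in> A \<Longrightarrow> 0 \<le> u i \<and> u i \<le> 1"
  shows "1 - sum u A \<le> (\<Prod>i\<in>A. 1 - u i)"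
  using assms
proof (induction A rule: finite_induct)
  case empty then show ?case by simp
next
  case (insert x F)
  have IH: "1 - sum u F \<le> (\<Prod>i\<in>F. 1 - u i)" using insert by auto
  have ux: "0 \<le> u x" "u x \<le> 1" using insert by auto
  have sF: "0 \<le> sum u F" using insert by (intro sum_nonneg) auto
  have "1 - sum u (insert x F) = 1 - u x - sum u F" using insert by simp
  also have "\<dots> \<le> (1 - u x) * (1 - sum u F)" using ux sF by (simp add: algebra_simps)
  also have "\<dots> \<le> (1 - u x) * (\<Prod>i\<in>F. 1 - u i)" using IH ux by (intro mult_left_mono) auto
  also have "\<dots> = (\<Prod>i\<in>insert x F. 1 - u i)" using insert by simp
  finally show ?case .
qed

lemma rho_prod_Suc:
  "j \<le> n \<Longrightarrow> rho_prod \<rho> j (Suc n) = rho_prod \<rho> j n * \<rho> (Suc n)"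
  unfolding rho_prod_def by (subst prod.cl_ivl_Suc) auto

lemma rho_prod_self: "rho_prod \<rho> n n = 1"
  unfolding rho_prod_def by simp

lemma rho_prod_split:
  assumes "i \<le> n" shows "rho_prod \<rho> 0 n = rho_prod \<rho> 0 i * rho_prod \<rho> i n"
  using assms
proof (induction n rule: dec_induct)
  case base then show ?case by (simp add: rho_prod_self)
next
  case (step m)
  then show ?case by (simp add: rho_prod_Suc)
qed

lemma telescope:
  "(\<Sum>j=1..n. (1 - \<rho> j) * rho_prod \<rho> j n) = 1 - rho_prod \<rho> 0 n"
proof (induction n)
  case 0 then show ?case by (simp add: rho_prod_def)
next
  case (Suc n)
  have e1: "(\<Sum>j=1..Suc n. (1 - \<rho> j) * rho_prod \<rho> j (Suc n))
      = (\<Sum>j=1..n. (1 - \<rho> j) * rho_prod \<rho> j (Suc n)) + (1 - \<rho> (Suc n))"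
    by (simp add: rho_prod_self)
  have e2: "(\<Sum>j=1..n. (1 - \<rho> j) * rho_prod \<rho> j (Suc n))
      = (\<Sum>j=1..n. (1 - \<rho> j) * rho_prod \<rho> j n) * \<rho> (Suc n)"
    by (simp add: sum_distrib_right rho_prod_Suc mult.assoc)
  have e3: "rho_prod \<rho> 0 (Suc n) = rho_prod \<rho> 0 n * \<rho> (Suc n)" by (simp add: rho_prod_Suc)
  show ?case unfolding e1 e2 e3 Suc.IH by (simp add: algebra_simps)
qed

context
  fixes \<rho> :: "nat \<Rightarrow> real"
  assumes pos: "\<And>k. k \<ge> 1 \<Longrightarrow> 0 < \<rho> k \<and> \<rho> k \<le> 1"
begin

lemma rp_pos: "0 < rho_prod \<rho> j n"
  unfolding rho_prod_def
proof (intro prod_pos)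
  fix x assume "x \<in> {j+1..n}" then show "0 < \<rho> x" using pos[of x] by auto
qed

lemma rp_le1: "rho_prod \<rho> j n \<le> 1"
  unfolding rho_prod_def
proof (intro prod_le_1)
  fix x assume "x \<in> {j+1..n}" then show "0 \<le> \<rho> x \<and> \<rho> x \<le> 1" using pos[of x] by auto
qed

lemma partial_le1:
  assumes "A \<subseteq> {1..n}"
  shows "(\<Sum>j\<in>A. (1 - \<rho> j) * rho_prod \<rho> j n) \<le> 1"
proof -
  have "(\<Sum>j\<in>A. (1 - \<rho> j) * rho_prod \<rho> j n) \<le> (\<Sum>j=1..n. (1 - \<rho> j) * rho_prod \<rho> j n)"
  proof (rule sum_mono2[OF _ assms])
    fix j assume "j \<in> {1..n} - A"
    then have "0 \<le> 1 - \<rho> j" using pos[of j] by auto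
    then show "0 \<le> (1 - \<rho> j) * rho_prod \<rho> j n" using rp_pos[of j n] by simp
  qed simp
  also have "\<dots> \<le> 1" using telescope[of \<rho> n] rp_pos[of 0 n] by simp
  finally show ?thesis .
qed

lemma R_lim:
  assumes div: "filterlim (\<lambda>N. \<Sum>n=1..N. 1 - \<rho> n) at_top sequentially"
  shows "(\<lambda>n. rho_prod \<rho> 0 n) \<longlonglongrightarrow> 0"
proof (rule tendsto_sandwich[of "\<lambda>_. 0" _ _ "\<lambda>N. exp (- (\<Sum>n=1..N. 1 - \<rho> n))"])
  show "\<forall>\<^sub>F n in sequentially. 0 \<le> rho_prod \<rho> 0 n" by (intro always_eventually allI) (simp add: less_imp_le rp_pos)
  show "\<forall>\<^sub>F n in sequentially. rho_prod \<rho> 0 n \<le> exp (- (\<Sum>n=1..n. 1 - \<rho> n))"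
  proof (intro always_eventually allI)
    fix N
    have "rho_prod \<rho> 0 N = (\<Prod>k\<in>{1..N}. \<rho> k)" by (simp add: rho_prod_def)
    also have "\<dots> \<le> (\<Prod>k\<in>{1..N}. exp (\<rho> k - 1))"
      using pos by (intro prod_mono) (auto intro: less_imp_le simp: exp_ge_add_one_self[of "\<rho> _ - 1", simplified])
    also have "\<dots> = exp (- (\<Sum>n=1..N. 1 - \<rho> n))"
      by (simp add: exp_sum[symmetric] sum_negf[symmetric])
    finally show "rho_prod \<rho> 0 N \<le> exp (- (\<Sum>n=1..N. 1 - \<rho> n))" .
  qed
  show "(\<lambda>_. 0::real) \<longlonglongrightarrow> 0" by simp
  show "(\<lambda>N. exp (- (\<Sum>n=1..N. 1 - \<rho> n))) \<longlonglongrightarrow> 0"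
    using filterlim_compose[OF exp_at_bot filterlim_compose[OF filterlim_uminus_at_bot_at_top div]]
    by (simp add: o_def)
qed

end


theorem mainTheorem8:
  fixes P :: "nat \<Rightarrow> nat pmf" and \<rho> :: "nat \<Rightarrow> real"
  assumes rho_def: "\<And>i. i \<ge> 1 \<Longrightarrow> \<rho> i = pgf_d1 (P i)"
    and mean_fin: "\<And>i. i \<ge> 1 \<Longrightarrow> summable (\<lambda>k. real k * pmf (P i) k)"
    and rho_pos: "\<And>i. i \<ge> 1 \<Longrightarrow> 0 < \<rho> i"
    and rho_lt1: "\<And>i. i \<ge> 1 \<Longrightarrow> \<rho> i < 1"
    and d2_fin: "\<And>i. i \<ge> 1 \<Longrightarrow> summable (\<lambda>k. real k * (real k - 1) * pmf (P i) k)"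
    and rho_lim: "\<rho> \<longlonglongrightarrow> 1"
    and div: "filterlim (\<lambda>N. \<Sum>n=1..N. 1 - \<rho> n) at_top sequentially"
    and d2_lim: "(\<lambda>n. pgf_d2 (P n) / (1 - \<rho> n)) \<longlonglongrightarrow> 0"
  shows "(\<lambda>n. \<Sum>j=1..n. (1 - \<rho> j) * theta_prod P \<rho> j n) \<longlonglongrightarrow> 1"
proof -
  have pos: "\<And>k. k \<ge> 1 \<Longrightarrow> 0 < \<rho> k \<and> \<rho> k \<le> 1" using rho_pos rho_lt1 less_imp_le by blast
  define rp where "rp = rho_prod \<rho>"
  define R where "R n = rp 0 n" for n
  define \<epsilon> where "\<epsilon> i = pgf_d2 (P i) / (2 * \<rho> i)" for i
  define E where "E n = (\<Sum>i=1..n. \<epsilon> i * rp i n)" for n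
  define T where "T n = (\<Sum>j=1..n. (1 - \<rho> j) * rp j n)" for n
  define S where "S n = (\<Sum>j=1..n. (1 - \<rho> j) * theta_prod P \<rho> j n)" for n
  have rp_pos': "\<And>j n. 0 < rp j n" unfolding rp_def using rp_pos[of \<rho>, OF pos] by blast
  have rp_le1': "\<And>j n. rp j n \<le> 1" unfolding rp_def using rp_le1[of \<rho>, OF pos] by blast
  have d2_nn: "\<And>i. i \<ge> 1 \<Longrightarrow> 0 \<le> pgf_d2 (P i)"
    using pgf_bounds(4)[OF mean_fin d2_fin, of _ 0] by auto
  have eps_nn: "\<And>i. i \<ge> 1 \<Longrightarrow> 0 \<le> \<epsilon> i" unfolding \<epsilon>_def
    by (metis d2_nn rho_pos divide_nonneg_pos mult_pos_pos zero_less_numeral)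
  have th: "0 \<le> theta P \<rho> i n \<and> theta P \<rho> i n \<le> \<rho> i \<and> \<rho> i * (1 - \<epsilon> i * rp i n) \<le> theta P \<rho> i n"
    if "i \<ge> 1" for i n
  proof -
    let ?r = "rp i n"
    have r: "0 \<le> ?r" "?r \<le> 1" "0 < ?r" using rp_pos' rp_le1' by (auto intro: less_imp_le)
    note b = pgf_bounds[OF mean_fin[OF that] d2_fin[OF that] r(1,2)]
    have thd: "theta P \<rho> i n = (1 - pgf (P i) (1 - ?r)) / ?r" unfolding theta_def rp_def by simp
    have "0 \<le> theta P \<rho> i n" unfolding thd using b(3) r by simp
    moreover have "theta P \<rho> i n \<le> \<rho> i" unfolding thd using b(1) r(3) rho_def[OF that]
      by (simp add: divide_le_eq mult.commute)
    moreover have "\<rho> i * (1 - \<epsilon> i * ?r) \<le> theta P \<rho> i n"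
    proof -
      have "\<rho> i * (1 - \<epsilon> i * ?r) = (\<rho> i * ?r - pgf_d2 (P i) / 2 * ?r^2) / ?r"
        unfolding \<epsilon>_def using r(3) rho_pos[OF that] by (simp add: field_simps power2_eq_square)
      also have "\<dots> \<le> theta P \<rho> i n" unfolding thd using b(2) r(3) rho_def[OF that]
        by (intro divide_right_mono) auto
      finally show ?thesis .
    qed
    ultimately show ?thesis by blast
  qed
  have R_lim': "R \<longlonglongrightarrow> 0" unfolding R_def rp_def using R_lim[of \<rho>, OF pos div] by simp
  have T_eq: "T n = 1 - R n" for n unfolding T_def R_def rp_def by (rule telescope)
  have T_lim: "T \<longlonglongrightarrow> 1" unfolding T_eq using tendsto_diff[OF tendsto_const[of 1] R_lim'] by simp
  have eprp: "0 \<le> \<epsilon> i * rp i n" if "i \<ge> 1" for i n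
    using eps_nn[OF that] rp_pos'[of i n] by simp
  have E_nn: "0 \<le> E n" for n unfolding E_def using eprp by (intro sum_nonneg) auto
  have E_lim: "E \<longlonglongrightarrow> 0"
  proof (rule LIMSEQ_I)
    fix \<delta> :: real assume "0 < \<delta>"
    have "(\<lambda>i. pgf_d2 (P i) / (1 - \<rho> i) / (2 * \<rho> i)) \<longlonglongrightarrow> 0 / (2 * 1)"
      by (intro tendsto_intros d2_lim rho_lim) simp
    then have L: "(\<lambda>i. pgf_d2 (P i) / (1 - \<rho> i) / (2 * \<rho> i)) \<longlonglongrightarrow> 0" by simp
    have hd: "0 < \<delta>/2" using \<open>0 < \<delta>\<close> by simp
    obtain N0 where N0: "\<And>i. i \<ge> N0 \<Longrightarrow> norm (pgf_d2 (P i) / (1 - \<rho> i) / (2 * \<rho> i) - 0) < \<delta>/2"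
      using LIMSEQ_D[OF L hd] by blast
    define N where "N = max N0 1"
    have epsle: "\<epsilon> i \<le> \<delta>/2 * (1 - \<rho> i)" if "i \<ge> N" for i
    proof -
      have i1: "i \<ge> 1" "i \<ge> N0" using that by (auto simp: N_def)
      have a: "0 < 1 - \<rho> i" using rho_lt1[OF i1(1)] by simp
      have eq: "\<epsilon> i / (1 - \<rho> i) = pgf_d2 (P i) / (1 - \<rho> i) / (2 * \<rho> i)"
        unfolding \<epsilon>_def by (simp add: divide_divide_eq_left mult.commute)
      have "\<epsilon> i / (1 - \<rho> i) < \<delta>/2" unfolding eq using N0[OF i1(2)] abs_ge_self
        by (metis diff_zero order_le_less_trans real_norm_def)
      then show ?thesis using a by (simp add: divide_less_eq mult.commute)
    qed
    define K where "K = (\<Sum>i\<in>{1..<N}. \<epsilon> i / R i)"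
    have L2: "(\<lambda>n. K * R n) \<longlonglongrightarrow> K * 0" by (intro tendsto_intros R_lim')
    obtain M where M: "\<And>n. n \<ge> M \<Longrightarrow> norm (K * R n - K * 0) < \<delta>/2"
      using LIMSEQ_D[OF L2 hd] by blast
    show "\<exists>no. \<forall>n\<ge>no. norm (E n - 0) < \<delta>"
    proof (intro exI allI impI)
      fix n assume n: "n \<ge> max N M"
      have N1: "1 \<le> N" "N \<le> n" using n by (auto simp: N_def)
      have split: "{1..n} = {1..<N} \<union> {N..n}" using N1 by auto
      have "E n = (\<Sum>i\<in>{1..<N}. \<epsilon> i * rp i n) + (\<Sum>i\<in>{N..n}. \<epsilon> i * rp i n)"
        unfolding E_def split by (rule sum.union_disjoint) auto
      also have "(\<Sum>i\<in>{1..<N}. \<epsilon> i * rp i n) = K * R n"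
        unfolding K_def sum_distrib_right
      proof (rule sum.cong[OF refl])
        fix i assume "i \<in> {1..<N}"
        then have "i \<le> n" using N1 by auto
        then have "R n = R i * rp i n" unfolding R_def rp_def by (rule rho_prod_split)
        then show "\<epsilon> i * rp i n = \<epsilon> i / R i * R n" using rp_pos'[of 0 i] unfolding R_def by simp
      qed
      also have "(\<Sum>i\<in>{N..n}. \<epsilon> i * rp i n) \<le> (\<Sum>i\<in>{N..n}. \<delta>/2 * ((1 - \<rho> i) * rp i n))"
        using epsle rp_pos' by (intro sum_mono) (auto intro!: mult_right_mono simp: less_imp_le mult.assoc[symmetric])
      also have "\<dots> = \<delta>/2 * (\<Sum>i\<in>{N..n}. (1 - \<rho> i) * rp i n)" by (simp add: sum_distrib_left)
      also have "\<dots> \<le> \<delta>/2 * 1"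
        using partial_le1[of \<rho>, OF pos, of "{N..n}" n] N1 \<open>0 < \<delta>\<close> unfolding rp_def
        by (intro mult_left_mono) auto
      finally have "E n \<le> K * R n + \<delta>/2" by simp
      moreover have "K * R n < \<delta>/2" using M[of n] n by auto
      ultimately show "norm (E n - 0) < \<delta>" using E_nn[of n] by simp
    qed
  qed
  have upper: "S n \<le> T n" for n
    unfolding S_def T_def
  proof (rule sum_mono)
    fix j assume j: "j \<in> {1..n}"
    have "theta_prod P \<rho> j n \<le> rp j n"
      unfolding theta_prod_def rp_def rho_prod_def
    proof (rule prod_mono)
      fix i assume "i \<in> {j+1..n}" then have "i \<ge> 1" by auto
      then show "0 \<le> theta P \<rho> i n \<and> theta P \<rho> i n \<le> \<rho> i" using th by blast
    qed
    then show "(1 - \<rho> j) * theta_prod P \<rho> j n \<le> (1 - \<rho> j) * rp j n"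
      using pos[of j] j by (intro mult_left_mono) auto
  qed
  have lower: "T n * (1 - E n) \<le> S n" if En: "E n \<le> 1" for n
  proof -
    have "T n * (1 - E n) = (\<Sum>j=1..n. (1 - \<rho> j) * (rp j n * (1 - E n)))"
      unfolding T_def by (simp add: sum_distrib_right mult.assoc)
    also have "\<dots> \<le> S n" unfolding S_def
    proof (rule sum_mono)
      fix j assume j: "j \<in> {1..n}"
      define u where "u i = \<epsilon> i * rp i n" for i
      have u: "0 \<le> u i \<and> u i \<le> 1" if "i \<in> {j+1..n}" for i
      proof -
        have i1: "i \<ge> 1" "i \<in> {1..n}" using that j by auto
        have "0 \<le> u i" unfolding u_def using eps_nn[OF i1(1)] rp_pos'[of i n] by simp
        moreover have "u i \<le> E n" unfolding E_def u_def
          using i1 eprp by (intro member_le_sum) auto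
        ultimately show ?thesis using En by simp
      qed
      have sumu: "sum u {j+1..n} \<le> E n" unfolding E_def u_def
        using j eprp by (intro sum_mono2) auto
      have "rp j n * (1 - E n) \<le> rp j n * (1 - sum u {j+1..n})"
        using sumu rp_pos'[of j n] by (intro mult_left_mono) auto
      also have "\<dots> \<le> rp j n * (\<Prod>i\<in>{j+1..n}. 1 - u i)"
        using prod_one_minus_ge[of "{j+1..n}" u] u rp_pos'[of j n] by (intro mult_left_mono) auto
      also have "\<dots> = (\<Prod>i\<in>{j+1..n}. \<rho> i * (1 - u i))"
        unfolding rp_def rho_prod_def by (simp add: prod.distrib)
      also have "\<dots> \<le> theta_prod P \<rho> j n"
        unfolding theta_prod_def
      proof (rule prod_mono)
        fix i assume i: "i \<in> {j+1..n}" then have "i \<ge> 1" by auto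
        then show "0 \<le> \<rho> i * (1 - u i) \<and> \<rho> i * (1 - u i) \<le> theta P \<rho> i n"
          using th[of i n] u[OF i] pos[of i] unfolding u_def by auto
      qed
      finally show "(1 - \<rho> j) * (rp j n * (1 - E n)) \<le> (1 - \<rho> j) * theta_prod P \<rho> j n"
        using pos[of j] j by (intro mult_left_mono) auto
    qed
    finally show ?thesis .
  qed
  have "S \<longlonglongrightarrow> 1"
  proof (rule tendsto_sandwich[of "\<lambda>n. T n * (1 - E n)" S sequentially T])
    have "\<forall>\<^sub>F n in sequentially. E n < 1"
      using E_lim by (rule order_tendstoD) simp
    then show "\<forall>\<^sub>F n in sequentially. T n * (1 - E n) \<le> S n"
      by eventually_elim (use lower in auto)
    show "\<forall>\<^sub>F n in sequentially. S n \<le> T n" using upper by simp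
    show "(\<lambda>n. T n * (1 - E n)) \<longlonglongrightarrow> 1"
      using tendsto_mult[OF T_lim tendsto_diff[OF tendsto_const[of 1] E_lim]] by simp
    show "T \<longlonglongrightarrow> 1" by (rule T_lim)
  qed
  then show ?thesis unfolding S_def .
qed

end
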